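(* For every positive integer $n$, the lattice $\widetilde\Pi(D_n)$ does not contain a sublattice isomorphic to the diamond lattice $M_3$.
   Context: For a positive integer $n$, $D_n=\langle r,s\mid r^n=e,\ s^2=e,\ srs^{-1}=r^{-1}\rangle$ is the dihedral group of order $2n$. For a finite group $G$ and a subgroup $H\le G$, let $\pi_e(H)=\{o(x)\mid x\in H\}$. Let $\mathcal{L}(G)$ be the set of subgroups of $G$; define $H_1\equiv H_2$ iff $\pi_e(H_1)=\pi_e(H_2)$, with class $[H]$. The poset $\widetilde\Pi(G)$ is $\mathcal{L}(G)/\!\equiv$ ordered by $[H_1]\lesssim[H_2]$ iff $\pi_e(H_1)\subseteq\pi_e(H_2)$; for $G=D_n$ it is a lattice. $M_3$ is the five-element lattice consisting of a bottom, a top, and three pairwise incomparable elements between them. *)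

theory Defs
  imports "HOL-Algebra.Multiplicative_Group"
begin

text \<open>Concrete model of the dihedral group D_n of order 2n: the pair (k, b) stands for
  r^k s^b with 0 <= k < n.  Since s r^j = r^(-j) s, we get
  (r^a s^u)(r^b s^v) = r^(a + b) s^v if u = 0, and r^(a - b) s^(not v) if u = 1.\<close>

definition dihedral :: "nat \<Rightarrow> (nat \<times> bool) monoid" where
  "dihedral n = \<lparr> carrier = {0..<n} \<times> (UNIV :: bool set),
      monoid.mult = (\<lambda>(a, u) (b, v).
         (if u then (a + n - b) mod n else (a + b) mod n, u \<noteq> v)),
      one = (0, False) \<rparr>"

definition pi_e :: "('a, 'b) monoid_scheme \<Rightarrow> 'a set \<Rightarrow> nat set" where
  "pi_e G H = (group.ord G) ` H"

text \<open>Carrier of the poset Pi~(G): subgroup classes modulo equality of pi_e, each class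
  represented by its common value pi_e(H); ordered by set inclusion.\<close>
definition pi_poset :: "('a, 'b) monoid_scheme \<Rightarrow> nat set set" where
  "pi_poset G = {pi_e G H | H. subgroup H G}"

definition is_meet :: "'c set set \<Rightarrow> 'c set \<Rightarrow> 'c set \<Rightarrow> 'c set \<Rightarrow> bool" where
  "is_meet P a b m \<longleftrightarrow> m \<in> P \<and> m \<subseteq> a \<and> m \<subseteq> b \<and>
     (\<forall>c\<in>P. c \<subseteq> a \<and> c \<subseteq> b \<longrightarrow> c \<subseteq> m)"

definition is_join :: "'c set set \<Rightarrow> 'c set \<Rightarrow> 'c set \<Rightarrow> 'c set \<Rightarrow> bool" where
  "is_join P a b j \<longleftrightarrow> j \<in> P \<and> a \<subseteq> j \<and> b \<subseteq> j \<and>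
     (\<forall>c\<in>P. a \<subseteq> c \<and> b \<subseteq> c \<longrightarrow> j \<subseteq> c)"

definition has_M3_sublattice :: "'c set set \<Rightarrow> bool" where
  "has_M3_sublattice P \<longleftrightarrow> (\<exists>bot top x y z.
     bot \<in> P \<and> top \<in> P \<and> x \<in> P \<and> y \<in> P \<and> z \<in> P \<and>
     distinct [bot, top, x, y, z] \<and>
     is_meet P x y bot \<and> is_meet P x z bot \<and> is_meet P y z bot \<and>
     is_join P x y top \<and> is_join P x z top \<and> is_join P y z top)"

end

theory Submission
  imports Defs "HOL-Computational_Algebra.Primes"
begin


definition DS :: "nat \<Rightarrow> nat set" where "DS m = {d. d dvd m}"

definition PP :: "nat \<Rightarrow> nat set set" where
  "PP n = {DS m \<union> S | m S. m dvd n \<and> S \<subseteq> {2}}"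

lemma distr: "(w::nat) dvd lcm a b \<Longrightarrow> w = lcm (gcd w a) (gcd w b)"
  by (metis gcd_lcm_distrib gcd_nat.absorb1)

lemma two_lcm: "(2::nat) dvd lcm a b \<Longrightarrow> 2 dvd a \<or> 2 dvd b"
proof -
  assume "(2::nat) dvd lcm a b"
  moreover have "lcm a b dvd a * b" by (simp add: lcm_least)
  ultimately have "2 dvd a * b" by (rule dvd_trans)
  thus ?thesis using prime_dvd_mult_iff[OF two_is_prime_nat] by blast
qed

lemma PP_int:
  assumes "x \<in> PP n" "z \<in> PP n" shows "x \<inter> z \<in> PP n"
proof -
  obtain m1 S1 where 1: "x = DS m1 \<union> S1" "m1 dvd n" "S1 \<subseteq> {2}" using assms(1) unfolding PP_def by blast
  obtain m3 S3 where 3: "z = DS m3 \<union> S3" "m3 dvd n" "S3 \<subseteq> {2}" using assms(2) unfolding PP_def by blast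
  have "x \<inter> z = DS (gcd m1 m3) \<union> (x \<inter> z \<inter> {2})"
    using 1 3 by (auto simp: DS_def)
  moreover have "gcd m1 m3 dvd n" using 1 by (meson dvd_trans gcd_dvd1)
  ultimately show ?thesis unfolding PP_def by blast
qed

lemma noM3: "\<not> has_M3_sublattice (PP n)"
proof
  assume "has_M3_sublattice (PP n)"
  then obtain bot top x y z where P: "bot \<in> PP n" "top \<in> PP n" "x \<in> PP n" "y \<in> PP n" "z \<in> PP n"
    and d: "distinct [bot, top, x, y, z]" and
     m: "is_meet (PP n) x y bot" "is_meet (PP n) x z bot" "is_meet (PP n) y z bot" and
     j: "is_join (PP n) x y top" "is_join (PP n) x z top"
    unfolding has_M3_sublattice_def by blast
  obtain m1 S1 where 1: "x = DS m1 \<union> S1" "m1 dvd n" "S1 \<subseteq> {2}" using P unfolding PP_def by blast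
  obtain m2 S2 where 2: "y = DS m2 \<union> S2" "m2 dvd n" "S2 \<subseteq> {2}" using P unfolding PP_def by blast
  obtain m3 S3 where 3: "z = DS m3 \<union> S3" "m3 dvd n" "S3 \<subseteq> {2}" using P unfolding PP_def by blast
  have bz: "bot \<subseteq> z" "bot \<subseteq> x" "bot \<subseteq> y" using m unfolding is_meet_def by auto
  have xz: "x \<inter> z \<subseteq> bot" using m(2) PP_int[OF P(3) P(5)] unfolding is_meet_def by auto
  have yz: "y \<inter> z \<subseteq> bot" using m(3) PP_int[OF P(4) P(5)] unfolding is_meet_def by auto
  have "z \<noteq> bot" using d by auto
  then obtain w where w: "w \<in> z" "w \<notin> bot" using bz by blast
  define Z where "Z = DS (lcm m1 m2) \<union> (S1 \<union> S2)"
  have ZP: "Z \<in> PP n" unfolding Z_def PP_def using 1 2 by (auto intro: lcm_least)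
  have "x \<subseteq> Z" "y \<subseteq> Z" unfolding Z_def 1 2 by (auto simp: DS_def intro: dvd_trans)
  hence "top \<subseteq> Z" using j(1) ZP unfolding is_join_def by auto
  moreover have "z \<subseteq> top" using j(2) unfolding is_join_def by auto
  ultimately have wZ: "w \<in> Z" using w by auto
  have wx: "w \<notin> x" "w \<notin> y" using w xz yz by auto
  have wl: "w dvd lcm m1 m2" using wZ wx 1 2 unfolding Z_def DS_def by auto
  have w3: "w dvd m3"
  proof (rule ccontr)
    assume "\<not> w dvd m3"
    hence "w = 2" using w 3 by (auto simp: DS_def)
    thus False using wl two_lcm wx 1 2 by (auto simp: DS_def)
  qed
  have "gcd w m1 \<in> x \<inter> z" using 1 3 w3 by (auto simp: DS_def intro: dvd_trans)
  hence g1: "gcd w m1 \<in> y" using xz bz by blast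
  have "gcd w m2 \<in> y \<inter> z" using 2 3 w3 by (auto simp: DS_def intro: dvd_trans)
  hence g2: "gcd w m2 \<in> x" using yz bz by blast
  have "gcd w m2 dvd m1 \<or> gcd w m1 dvd m2"
  proof -
    have "gcd w m1 dvd m1" by simp
    show ?thesis
    proof (rule ccontr)
      assume nc: "\<not> (gcd w m2 dvd m1 \<or> gcd w m1 dvd m2)"
      hence "gcd w m2 \<in> S1" "gcd w m1 \<in> S2" using g1 g2 1 2 by (auto simp: DS_def)
      hence "gcd w m2 = gcd w m1" using 1(3) 2(3) by (metis singletonD subsetD)
      thus False using nc \<open>gcd w m1 dvd m1\<close> by simp
    qed
  qed
  then show False
  proof
    assume "gcd w m2 dvd m1"
    hence "w dvd m1" using distr[OF wl] by (metis gcd_dvd2 lcm_least)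
    thus False using wx 1 by (auto simp: DS_def)
  next
    assume "gcd w m1 dvd m2"
    hence "w dvd m2" using distr[OF wl] by (metis gcd_dvd2 lcm_least)
    thus False using wx 2 by (auto simp: DS_def)
  qed
qed


lemma carD: "carrier (dihedral n) = {0..<n} \<times> (UNIV :: bool set)"
  by (simp add: dihedral_def)
lemma oneD: "one (dihedral n) = (0, False)"
  by (simp add: dihedral_def)
lemma multD: "(a,u) \<otimes>\<^bsub>dihedral n\<^esub> (b,v) = (if u then (a+n-b) mod n else (a+b) mod n, u\<noteq>v)"
  by (simp add: dihedral_def)

lemma int_sub: "b \<le> n \<Longrightarrow> int ((a+n-b) mod n) = (int a - int b) mod int n"
proof -
  assume "b \<le> n"
  hence "int (a+n-b) = int a - int b + int n" by simp
  hence "int ((a+n-b) mod n) = (int a - int b + int n) mod int n" by (metis of_nat_mod)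
  thus ?thesis by simp
qed
lemma int_add: "int ((a+b) mod n) = (int a + int b) mod int n"
  by (simp add: of_nat_mod)
lemma nat_eq_int: "(x::nat) = y \<longleftrightarrow> int x = int y" by simp
lemma mle: "0 < (n::nat) \<Longrightarrow> x mod n \<le> n" by (simp add: order_less_imp_le)
lemma arith4:
  assumes "0 < (n::nat)" "b < n" "c < n"
  shows "((a + n - b) mod n + n - c) mod n = (a + n - (b + c) mod n) mod n"
        "((a + n - b) mod n + c) mod n = (a + n - (b + n - c) mod n) mod n"
        "((a + b) mod n + n - c) mod n = (a + (b + n - c) mod n) mod n"
        "((a + b) mod n + c) mod n = (a + (b + c) mod n) mod n"
  using assms
  by (simp_all only: nat_eq_int int_sub int_add mle order_less_imp_le; simp add: mod_diff_eq mod_add_eq; simp add: mod_diff_left_eq mod_diff_right_eq mod_add_left_eq mod_add_right_eq algebra_simps)+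

lemma assocD:
  assumes "a < n" "b < n" "c < n"
  shows "((a,u) \<otimes>\<^bsub>dihedral n\<^esub> (b,v)) \<otimes>\<^bsub>dihedral n\<^esub> (c,w) = (a,u) \<otimes>\<^bsub>dihedral n\<^esub> ((b,v) \<otimes>\<^bsub>dihedral n\<^esub> (c,w))"
proof -
  have n: "0 < n" using assms by simp
  show ?thesis
  using arith4[OF n assms(2,3), of a]
  by (cases u; cases v; cases w; simp add: multD)
qed

lemma groupD: assumes "0 < n" shows "group (dihedral n)"
proof (rule groupI)
  fix x y assume "x \<in> carrier (dihedral n)" "y \<in> carrier (dihedral n)"
  thus "x \<otimes>\<^bsub>dihedral n\<^esub> y \<in> carrier (dihedral n)"
    using assms by (cases x; cases y; simp add: carD multD)
next
  show "\<one>\<^bsub>dihedral n\<^esub> \<in> carrier (dihedral n)" using assms by (simp add: carD oneD)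
next
  fix x y z assume "x \<in> carrier (dihedral n)" "y \<in> carrier (dihedral n)" "z \<in> carrier (dihedral n)"
  thus "x \<otimes>\<^bsub>dihedral n\<^esub> y \<otimes>\<^bsub>dihedral n\<^esub> z = x \<otimes>\<^bsub>dihedral n\<^esub> (y \<otimes>\<^bsub>dihedral n\<^esub> z)"
    by (cases x; cases y; cases z; simp only: carD; simp add: assocD)
next
  fix x assume "x \<in> carrier (dihedral n)"
  thus "\<one>\<^bsub>dihedral n\<^esub> \<otimes>\<^bsub>dihedral n\<^esub> x = x"
    by (cases x; simp add: carD oneD multD)
next
  fix x assume x: "x \<in> carrier (dihedral n)"
  obtain a u where xa: "x = (a,u)" "a < n" using x by (cases x; auto simp: carD)
  show "\<exists>y\<in>carrier (dihedral n). y \<otimes>\<^bsub>dihedral n\<^esub> x = \<one>\<^bsub>dihedral n\<^esub>"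
  proof (cases u)
    case True
    thus ?thesis using xa by (intro bexI[of _ "(a,True)"]) (auto simp: carD multD oneD)
  next
    case False
    show ?thesis using xa False assms
      by (intro bexI[of _ "((n-a) mod n,False)"]) (auto simp: carD multD oneD mod_add_left_eq)
  qed
qed



lemma nt1: "0 < (n::nat) \<Longrightarrow> (n dvd j * k) \<longleftrightarrow> (n div gcd k n) dvd j"
  by (metis (no_types, lifting) div_dvd_iff_mult dvd_mult gcd_eq_0_iff
    gcd_greatest_iff gcd_mult_distrib_nat gcd_nat.order_iff_strict neq0_conv)

lemma nt2: "0 < (n::nat) \<Longrightarrow> c dvd k \<Longrightarrow> c dvd n \<Longrightarrow> (n div gcd k n) dvd (n div c)"
  by (metis div_greater_zero_iff dvd_div_mult_self dvd_mult_imp_div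
    gcd_le2_nat gcd_nat.boundedI gcd_nat.cobounded2 gcd_pos_nat
    less_le_not_le nat_mult_dvd_cancel1)

context
  fixes n :: nat
  assumes n: "0 < n"
begin

interpretation G: group "dihedral n" by (rule groupD[OF n])

lemma powR: "k < n \<Longrightarrow> (k,False) [^]\<^bsub>dihedral n\<^esub> (j::nat) = (j*k mod n, False)"
proof (induction j)
  case 0 thus ?case by (simp add: oneD)
next
  case (Suc j) thus ?case by (simp add: multD mod_add_right_eq add.commute)
qed

lemma powS: "k < n \<Longrightarrow> (k,True) [^]\<^bsub>dihedral n\<^esub> (j::nat) = (if even j then (0,False) else (k,True))"
proof (induction j)
  case 0 thus ?case by (simp add: oneD)
next
  case (Suc j) thus ?case by (simp add: multD)
qed

lemma ordS: "k < n \<Longrightarrow> G.ord (k,True) = 2"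
  by (subst G.ord_unique) (auto simp: carD powS oneD)

lemma ordR: "k < n \<Longrightarrow> G.ord (k,False) = n div gcd k n"
  by (subst G.ord_unique) (auto simp: carD powR oneD nt1[OF n] dvd_eq_mod_eq_0[symmetric])

lemma invR: "k < n \<Longrightarrow> inv\<^bsub>dihedral n\<^esub> (k,False) = ((n-k) mod n, False)"
  by (rule G.inv_equality) (auto simp: carD multD oneD n mod_add_left_eq)

lemma invS: "k < n \<Longrightarrow> inv\<^bsub>dihedral n\<^esub> (k,True) = (k,True)"
  by (rule G.inv_equality) (auto simp: carD multD oneD)


lemma DSord: assumes "c dvd n" shows "{n div gcd k n | k. k<n \<and> c dvd k} = DS (n div c)"
proof
  show "{n div gcd k n | k. k<n \<and> c dvd k} \<subseteq> DS (n div c)"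
    using nt2[OF n] assms by (auto simp: DS_def)
next
  show "DS (n div c) \<subseteq> {n div gcd k n | k. k<n \<and> c dvd k}"
  proof
    fix e assume "e \<in> DS (n div c)"
    hence e: "e dvd n div c" by (simp add: DS_def)
    have c0: "0 < c" using assms n by (metis dvd_0_left_iff neq0_conv)
    have nc: "n = c * (n div c)" using assms by simp
    have epos: "0 < e" using e n assms by (metis dvd_0_left_iff dvd_div_eq_0_iff neq0_conv)
    show "e \<in> {n div gcd k n | k. k<n \<and> c dvd k}"
    proof (cases "e = 1")
      case True
      thus ?thesis using n by (intro CollectI exI[of _ 0]) auto
    next
      case False
      hence e1: "1 < e" using epos by simp
      have en: "e dvd n" using e assms by (metis dvd_div_iff_mult dvd_trans dvd_triv_right nc)
      have k: "n div e < n" using e1 n by simp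
      have ck: "c dvd n div e"
      proof -
        obtain t where "n div c = e * t" using e by blast
        hence "n = e * (c * t)" using nc by (metis mult.left_commute)
        hence "n div e = c * t" using epos by simp
        thus ?thesis by simp
      qed
      obtain t where t: "n = e * t" using en by blast
      have t0: "0 < t" using t n by (metis mult_0_right neq0_conv)
      have ndt: "n div e = t" using t epos by simp
      have g: "gcd t n = t" using t by (simp add: gcd_nat.absorb1)
      have "n div gcd (n div e) n = e" unfolding ndt g using t t0 by simp
      thus ?thesis using k ck by (intro CollectI exI[of _ "n div e"]) simp
    qed
  qed
qed

definition Hc :: "nat \<Rightarrow> bool \<Rightarrow> (nat \<times> bool) set" where
  "Hc c s = {(k,b). k<n \<and> c dvd k \<and> (b \<longrightarrow> s)}"

lemma Hc_sub: assumes "c dvd n" shows "subgroup (Hc c s) (dihedral n)"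
proof (rule G.subgroupI)
  show "Hc c s \<subseteq> carrier (dihedral n)" by (auto simp: Hc_def carD)
  show "Hc c s \<noteq> {}" using n by (auto simp: Hc_def)
next
  fix a assume "a \<in> Hc c s"
  then obtain k b where a: "a = (k,b)" "k < n" "c dvd k" "b \<longrightarrow> s" by (auto simp: Hc_def)
  show "inv\<^bsub>dihedral n\<^esub> a \<in> Hc c s"
  proof (cases b)
    case True thus ?thesis using a invS by (auto simp: Hc_def)
  next
    case False
    have "c dvd (n - k) mod n" using a assms by (simp add: dvd_mod_iff dvd_diff_nat)
    thus ?thesis using a invR False n by (auto simp: Hc_def)
  qed
next
  fix a b assume "a \<in> Hc c s" "b \<in> Hc c s"
  then obtain k u l v where ab: "a = (k,u)" "k < n" "c dvd k" "u \<longrightarrow> s" "b = (l,v)" "l < n" "c dvd l" "v \<longrightarrow> s"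
    by (auto simp: Hc_def)
  have "c dvd (k + n - l) mod n" using ab assms by (simp add: dvd_mod_iff dvd_diff_nat)
  moreover have "c dvd (k + l) mod n" using ab assms by (simp add: dvd_mod_iff)
  ultimately show "a \<otimes>\<^bsub>dihedral n\<^esub> b \<in> Hc c s" using ab n by (auto simp: Hc_def multD)
qed

lemma ord_split: "H \<subseteq> carrier (dihedral n) \<Longrightarrow>
   G.ord ` H = {n div gcd k n | k. (k,False) \<in> H} \<union> (if (\<exists>k. (k,True) \<in> H) then {2} else {})"
proof (intro equalityI subsetI)
  assume H: "H \<subseteq> carrier (dihedral n)"
  fix x assume "x \<in> G.ord ` H"
  then obtain k b where kb: "(k,b) \<in> H" "x = G.ord (k,b)" by auto
  have k: "k < n" using kb H by (auto simp: carD)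
  show "x \<in> {n div gcd k n | k. (k,False) \<in> H} \<union> (if (\<exists>k. (k,True) \<in> H) then {2} else {})"
  proof (cases b)
    case True thus ?thesis using kb k ordS by auto
  next
    case False thus ?thesis using kb k ordR by auto
  qed
next
  assume H: "H \<subseteq> carrier (dihedral n)"
  fix x assume x: "x \<in> {n div gcd k n | k. (k,False) \<in> H} \<union> (if (\<exists>k. (k,True) \<in> H) then {2} else {})"
  show "x \<in> G.ord ` H"
  proof (cases "x \<in> {n div gcd k n | k. (k,False) \<in> H}")
    case True
    then obtain k where k: "(k,False) \<in> H" "x = n div gcd k n" by auto
    have "k < n" using k H by (auto simp: carD)
    thus ?thesis using k ordR by (metis image_eqI)
  next
    case False
    then obtain k where k: "(k,True) \<in> H" "x = 2" using x by (auto split: if_splits)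
    have "k < n" using k H by (auto simp: carD)
    thus ?thesis using k ordS by (metis image_eqI)
  qed
qed

lemma pi_Hc: assumes "c dvd n" shows "pi_e (dihedral n) (Hc c s) = DS (n div c) \<union> (if s then {2} else {})"
proof -
  have "pi_e (dihedral n) (Hc c s) = {n div gcd k n | k. (k,False) \<in> Hc c s} \<union> (if (\<exists>k. (k,True) \<in> Hc c s) then {2} else {})"
    unfolding pi_e_def by (rule ord_split) (auto simp: Hc_def carD)
  also have "{n div gcd k n | k. (k,False) \<in> Hc c s} = {n div gcd k n | k. k<n \<and> c dvd k}"
    by (auto simp: Hc_def)
  also have "(\<exists>k. (k,True) \<in> Hc c s) = s" using n by (auto simp: Hc_def)
  finally show ?thesis using DSord[OF assms] by simp
qed


lemma powH: assumes H: "subgroup H (dihedral n)" and x: "x \<in> H" shows "x [^]\<^bsub>dihedral n\<^esub> (j::nat) \<in> H"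
proof (induction j)
  case 0 thus ?case using subgroup.one_closed[OF H] by simp
next
  case (Suc j) thus ?case using subgroup.m_closed[OF H _ x] by simp
qed

lemma rot_struct: assumes H: "subgroup H (dihedral n)"
  shows "\<exists>c. c dvd n \<and> (\<forall>k<n. (k,False) \<in> H \<longleftrightarrow> c dvd k)"
proof -
  have Hc: "H \<subseteq> carrier (dihedral n)" by (rule subgroup.subset[OF H])
  have one: "(0,False) \<in> H" using subgroup.one_closed[OF H] by (simp add: oneD)
  show ?thesis
  proof (cases "\<exists>k. 0<k \<and> (k,False)\<in>H")
    case False
    have "\<forall>k<n. (k,False) \<in> H \<longleftrightarrow> n dvd k"
    proof (intro allI impI)
      fix k assume "k < n"
      hence "n dvd k \<longleftrightarrow> k = 0" by (metis dvd_0_right dvd_imp_le neq0_conv not_le)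
      thus "(k,False) \<in> H \<longleftrightarrow> n dvd k" using False one by auto
    qed
    thus ?thesis by (intro exI[of _ n] conjI dvd_refl)
  next
    case True
    define c where "c = (LEAST k. 0<k \<and> (k,False)\<in>H)"
    have c: "0<c" "(c,False)\<in>H" using LeastI_ex[OF True] unfolding c_def by auto
    have cmin: "c \<le> r" if "0<r" "(r,False)\<in>H" for r
      unfolding c_def by (rule Least_le) (use that in auto)
    have cn: "c < n" using c Hc by (auto simp: carD)
    have mult: "(j*c,False) \<in> H" if "j*c < n" for j
      using powH[OF H c(2), of j] powR[OF cn, of j] that by simp
    have invm: "((n - j*c), False) \<in> H" if "j*c < n" "0 < j*c" for j
    proof -
      have "inv\<^bsub>dihedral n\<^esub> (j*c,False) \<in> H" using subgroup.m_inv_closed[OF H mult[OF that(1)]] .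
      thus ?thesis using invR[OF that(1)] that by simp
    qed
    have sub: "(k - j*c, False) \<in> H" if "(k,False) \<in> H" "j*c \<le> k" "k < n" for k j
    proof (cases "j*c = 0")
      case True
      hence "k - j*c = k" by auto
      thus ?thesis using that(1) by simp
    next
      case False
      hence "((n - j*c), False) \<in> H" using invm that by simp
      hence "(k,False) \<otimes>\<^bsub>dihedral n\<^esub> (n - j*c, False) \<in> H" using subgroup.m_closed[OF H that(1)] by blast
      moreover have "(k + (n - j*c)) mod n = k - j*c"
      proof -
        have e: "k + (n - j*c) = (k - j*c) + n" using that by simp
        have "(k + (n - j*c)) mod n = ((k - j*c) + n) mod n" by (simp only: e)
        also have "\<dots> = (k - j*c) mod n" by (rule mod_add_self2)
        also have "\<dots> = k - j*c" using that(3) by simp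
        finally show ?thesis .
      qed
      ultimately show ?thesis by (simp add: multD)
    qed
    have dvdn: "c dvd n"
    proof (rule ccontr)
      assume nd: "\<not> c dvd n"
      define q where "q = n div c"
      have r0: "0 < n mod c" using nd by (simp add: dvd_eq_mod_eq_0)
      have qc: "q*c + n mod c = n" unfolding q_def by simp
      have q1: "0 < q" unfolding q_def using cn c(1) by (simp add: div_greater_zero_iff)
      have "(n - q*c, False) \<in> H" using invm[of q] qc r0 q1 c by simp
      moreover have "n - q*c = n mod c" using qc by simp
      ultimately have "c \<le> n mod c" using cmin r0 by simp
      thus False using mod_less_divisor[OF c(1), of n] by linarith
    qed
    have "\<forall>k<n. (k,False) \<in> H \<longleftrightarrow> c dvd k"
    proof (intro allI impI iffI)
      fix k assume k: "k < n" "c dvd k"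
      then obtain j where "k = j*c" by (metis dvd_def mult.commute)
      thus "(k,False) \<in> H" using mult k by simp
    next
      fix k assume k: "k < n" "(k,False) \<in> H"
      have "(k - (k div c)*c, False) \<in> H" using sub[OF k(2) _ k(1), of "k div c"] by simp
      moreover have "k - (k div c)*c = k mod c" by (simp add: minus_div_mult_eq_mod)
      ultimately have "(k mod c, False) \<in> H" by simp
      hence "k mod c = 0" using cmin c by (metis mod_less_divisor not_le neq0_conv)
      thus "c dvd k" by (simp add: dvd_eq_mod_eq_0)
    qed
    thus ?thesis using dvdn by (intro exI[of _ c] conjI)
  qed
qed

lemma pi_poset_eq: "pi_poset (dihedral n) = PP n"
proof (intro equalityI subsetI)
  fix X assume "X \<in> pi_poset (dihedral n)"
  then obtain H where H: "subgroup H (dihedral n)" "X = pi_e (dihedral n) H" by (auto simp: pi_poset_def)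
  obtain c where c: "c dvd n" "\<forall>k<n. (k,False) \<in> H \<longleftrightarrow> c dvd k" using rot_struct[OF H(1)] by blast
  have Hs: "H \<subseteq> carrier (dihedral n)" by (rule subgroup.subset[OF H(1)])
  have "{n div gcd k n | k. (k,False) \<in> H} = {n div gcd k n | k. k<n \<and> c dvd k}"
  proof -
    have "(k,False) \<in> H \<longleftrightarrow> k<n \<and> c dvd k" for k
    proof
      assume a: "(k,False) \<in> H"
      hence "k < n" using Hs by (auto simp: carD)
      thus "k<n \<and> c dvd k" using a c(2) by blast
    next
      assume "k<n \<and> c dvd k" thus "(k,False) \<in> H" using c(2) by blast
    qed
    thus ?thesis by simp
  qed
  hence "X = DS (n div c) \<union> (if (\<exists>k. (k,True) \<in> H) then {2} else {})"
    using H(2) ord_split[OF Hs] DSord[OF c(1)] unfolding pi_e_def by simp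
  moreover have "n div c dvd n"
  proof -
    have "n = (n div c) * c" using c(1) by simp
    thus ?thesis by (metis dvd_triv_left)
  qed
  ultimately show "X \<in> PP n" unfolding PP_def by (intro CollectI exI[of _ "n div c"] exI[of _ "if (\<exists>k. (k,True) \<in> H) then {2} else {}"]) auto
next
  fix X assume "X \<in> PP n"
  then obtain m S where mS: "X = DS m \<union> S" "m dvd n" "S \<subseteq> {2}" by (auto simp: PP_def)
  define c where "c = n div m"
  have cd: "c dvd n"
  proof -
    have "n = (n div m) * m" using mS(2) by simp
    thus ?thesis unfolding c_def by (metis dvd_triv_left)
  qed
  have ncm: "n div c = m"
  proof -
    obtain t where t: "n = m*t" using mS(2) by blast
    have "0 < m" "0 < t" using t n by auto
    hence "c = t" unfolding c_def t by simp
    thus ?thesis using t \<open>0 < t\<close> by simp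
  qed
  have S: "X = DS m \<union> (if 2 \<in> S then {2} else {})" using mS(3) mS(1) by auto
  have "X = pi_e (dihedral n) (Hc c (2 \<in> S))" unfolding pi_Hc[OF cd, of "2 \<in> S"] ncm by (rule S)
  thus "X \<in> pi_poset (dihedral n)" using Hc_sub[OF cd, of "2 \<in> S"] unfolding pi_poset_def by blast
qed

end

theorem theorem2p8:
  fixes n :: nat
  assumes "0 < n"
  shows "\<not> has_M3_sublattice (pi_poset (dihedral n))"
  using pi_poset_eq[OF assms] noM3[of n] by simp

end
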